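(* Let $M$ be a finitely generated permutable monoid. Then the language $\{a^nb^n : n\ge1\}^*$ over $\{a,b\}$ does not belong to $\mathfrak{L}_{Rat}(M)$.
   Context: A monoid $M$ is permutable if for some $n\ge 2$, for all $s_1,\dots,s_n\in M$ there is a non-identity permutation $\sigma$ of $\{1,\dots,n\}$ with $s_1\cdots s_n=s_{\sigma(1)}\cdots s_{\sigma(n)}$. An $M$-automaton is a tuple $(Q,\Sigma,M,\delta,q_0,Q_a)$ with finite state set, input alphabet $\Sigma$, initial state $q_0$, accept states $Q_a$, and $\delta: Q\times(\Sigma\cup\{\varepsilon\})\to\mathbb{P}(Q\times M)$ finite-valued; $(q',m)\in\delta(q,\sigma)$ means reading $\sigma$ in state $q$ it may go to $q'$ and multiply the register on the right by $m$. A rational monoid automaton over $M$ is an $M$-automaton with rational subsets $I_0,I_1\subseteq M$; $w$ is accepted if some computation reading $w$ from $q_0$ to an accept state has register product $x$ with $x_0x\in I_1$ for some $x_0\in I_0$. $\mathfrak{L}_{Rat}(M)$ is the family of languages so accepted. *)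

theory Defs
  imports "HOL-Combinatorics.Permutations"
begin

inductive_set mstar :: "'a::monoid_mult set \<Rightarrow> 'a set" for A where
  one: "1 \<in> mstar A"
| step: "x \<in> A \<Longrightarrow> y \<in> mstar A \<Longrightarrow> x * y \<in> mstar A"

definition set_prod :: "'a::monoid_mult set \<Rightarrow> 'a set \<Rightarrow> 'a set" where
  "set_prod A B = {x * y | x y. x \<in> A \<and> y \<in> B}"

inductive_set rational_subsets :: "'a::monoid_mult set set" where
  fin: "finite A \<Longrightarrow> A \<in> rational_subsets"
| union: "A \<in> rational_subsets \<Longrightarrow> B \<in> rational_subsets \<Longrightarrow> A \<union> B \<in> rational_subsets"
| prod: "A \<in> rational_subsets \<Longrightarrow> B \<in> rational_subsets \<Longrightarrow> set_prod A B \<in> rational_subsets"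
| star: "A \<in> rational_subsets \<Longrightarrow> mstar A \<in> rational_subsets"

definition finitely_generated :: "'a::monoid_mult itself \<Rightarrow> bool" where
  "finitely_generated TYPE('a) \<longleftrightarrow> (\<exists>G :: 'a set. finite G \<and> mstar G = UNIV)"

definition permutable :: "'a::monoid_mult itself \<Rightarrow> bool" where
  "permutable TYPE('a) \<longleftrightarrow>
     (\<exists>n::nat. n \<ge> 2 \<and> (\<forall>s :: nat \<Rightarrow> 'a. \<exists>\<sigma>. \<sigma> permutes {1..n} \<and> \<sigma> \<noteq> id \<and>
        prod_list (map s [1..<n+1]) = prod_list (map (\<lambda>i. s (\<sigma> i)) [1..<n+1])))"

text \<open>States are natural numbers (w.l.o.g.); input letters have type 'c;
  None stands for the empty word \<epsilon>.
  run delta q w x q': reading w from q the automaton can reach q' with register product x.\<close>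
inductive run :: "(nat \<Rightarrow> 'c option \<Rightarrow> (nat \<times> 'a::monoid_mult) set)
                   \<Rightarrow> nat \<Rightarrow> 'c list \<Rightarrow> 'a \<Rightarrow> nat \<Rightarrow> bool" for \<delta> where
  nil: "run \<delta> q [] 1 q"
| eps: "(q', m) \<in> \<delta> q None \<Longrightarrow> run \<delta> q' w x q'' \<Longrightarrow> run \<delta> q w (m * x) q''"
| letter: "(q', m) \<in> \<delta> q (Some c) \<Longrightarrow> run \<delta> q' w x q'' \<Longrightarrow> run \<delta> q (c # w) (m * x) q''"

definition is_M_automaton ::
  "nat set \<Rightarrow> 'c set \<Rightarrow> (nat \<Rightarrow> 'c option \<Rightarrow> (nat \<times> 'a::monoid_mult) set) \<Rightarrow> nat \<Rightarrow> nat set \<Rightarrow> bool" where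
  "is_M_automaton Q \<Sigma> \<delta> q0 Qa \<longleftrightarrow>
     finite Q \<and> q0 \<in> Q \<and> Qa \<subseteq> Q \<and>
     (\<forall>q c. finite (\<delta> q c) \<and>
        (q \<notin> Q \<or> (c \<noteq> None \<and> the c \<notin> \<Sigma>) \<longrightarrow> \<delta> q c = {}) \<and>
        fst ` \<delta> q c \<subseteq> Q)"

definition rat_accepted ::
  "(nat \<Rightarrow> 'c option \<Rightarrow> (nat \<times> 'a::monoid_mult) set) \<Rightarrow> nat \<Rightarrow> nat set \<Rightarrow> 'a set \<Rightarrow> 'a set \<Rightarrow> 'c list set" where
  "rat_accepted \<delta> q0 Qa I0 I1 =
     {w. \<exists>q x. q \<in> Qa \<and> run \<delta> q0 w x q \<and> (\<exists>x0 \<in> I0. x0 * x \<in> I1)}"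

definition L_Rat :: "'a::monoid_mult itself \<Rightarrow> 'c set \<Rightarrow> 'c list set set" where
  "L_Rat TYPE('a) \<Sigma> =
     {L. \<exists>Q (\<delta> :: nat \<Rightarrow> 'c option \<Rightarrow> (nat \<times> 'a) set) q0 Qa I0 I1.
          is_M_automaton Q \<Sigma> \<delta> q0 Qa \<and> I0 \<in> rational_subsets \<and> I1 \<in> rational_subsets \<and>
          L = rat_accepted \<delta> q0 Qa I0 I1}"

datatype ab = a | b

definition anbn_star :: "ab list set" where
  "anbn_star = {concat ws | ws. \<forall>u \<in> set ws. \<exists>n\<ge>1. u = replicate n a @ replicate n b}"

end

theory Submission
  imports Defs
begin


lemma run_append:
  "run \<delta> q u y p \<Longrightarrow> run \<delta> p v z q' \<Longrightarrow> run \<delta> q (u @ v) (y * z) q'"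
proof (induction rule: run.induct)
  case (nil q) then show ?case by simp
next
  case (eps q' m q w x q'')
  then show ?case by (metis run.eps mult.assoc)
next
  case (letter q' m q c w x q'')
  then show ?case by (metis run.letter mult.assoc append_Cons)
qed

lemma run_split_aux:
  "run \<delta> q w x q'' \<Longrightarrow> \<forall>u v. w = u @ v \<longrightarrow> (\<exists>p y z. run \<delta> q u y p \<and> run \<delta> p v z q'' \<and> x = y * z)"
proof (induction rule: run.induct)
  case (nil q) then show ?case using run.nil[of \<delta> q] by fastforce
next
  case (eps q' m q w x q'')
  show ?case
  proof (intro allI impI)
    fix u v assume "w = u @ v"
    then obtain p y z where "run \<delta> q' u y p" "run \<delta> p v z q''" "x = y * z" using eps.IH by blast
    then show "\<exists>p y z. run \<delta> q u y p \<and> run \<delta> p v z q'' \<and> m * x = y * z"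
      using eps.hyps(1) by (metis run.eps mult.assoc)
  qed
next
  case (letter q' m q c w x q'')
  show ?case
  proof (intro allI impI)
    fix u v assume h: "c # w = u @ v"
    show "\<exists>p y z. run \<delta> q u y p \<and> run \<delta> p v z q'' \<and> m * x = y * z"
    proof (cases u)
      case Nil
      then have "v = c # w" using h by simp
      then show ?thesis using Nil letter.hyps run.nil run.letter
        by (metis mult_1)
    next
      case (Cons c' u')
      then have "c' = c" "w = u' @ v" using h by auto
      then obtain p y z where "run \<delta> q' u' y p" "run \<delta> p v z q''" "x = y * z" using letter.IH by blast
      then show ?thesis using letter.hyps(1) Cons \<open>c' = c\<close> by (metis run.letter mult.assoc)
    qed
  qed
qed

lemma run_split:
  "run \<delta> q (u @ v) x q'' \<Longrightarrow> \<exists>p y z. run \<delta> q u y p \<and> run \<delta> p v z q'' \<and> x = y * z"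
  using run_split_aux by blast

lemma run_pieces:
  "run \<delta> p (concat (map f [0..<L])) x p' \<Longrightarrow>
   \<exists>st ms e. st 0 = p \<and> (\<forall>k<L. run \<delta> (st k) (f k) (ms k) (st (Suc k))) \<and>
      run \<delta> (st L) [] e p' \<and> x = prod_list (map ms [0..<L]) * e"
proof (induction L arbitrary: p' x)
  case 0
  then show ?case by (rule_tac x="\<lambda>_. p" in exI) auto
next
  case (Suc L)
  have "concat (map f [0..<Suc L]) = concat (map f [0..<L]) @ f L" by simp
  then obtain r y z where r1: "run \<delta> p (concat (map f [0..<L])) y r" and r2: "run \<delta> r (f L) z p'"
    and xe: "x = y * z" using Suc.prems run_split by metis
  obtain st ms e where st0: "st 0 = p" and stk: "\<forall>k<L. run \<delta> (st k) (f k) (ms k) (st (Suc k))"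
    and re: "run \<delta> (st L) [] e r" and ye: "y = prod_list (map ms [0..<L]) * e"
    using Suc.IH[OF r1] by blast
  define st' where "st' = st(Suc L := p')"
  define ms' where "ms' = ms(L := e * z)"
  have "run \<delta> (st L) ([] @ f L) (e * z) p'" using run_append[OF re r2] .
  then have A: "\<forall>k<Suc L. run \<delta> (st' k) (f k) (ms' k) (st' (Suc k))"
    using stk by (auto simp: st'_def ms'_def less_Suc_eq)
  have B: "map ms' [0..<L] = map ms [0..<L]" by (auto simp: ms'_def)
  have C: "x = prod_list (map ms' [0..<Suc L]) * 1"
    using xe ye B by (simp add: ms'_def mult.assoc)
  show ?case
    apply (rule exI[of _ st'], rule exI[of _ ms'], rule exI[of _ 1])
    using A C st0 run.nil[of \<delta> p'] by (auto simp: st'_def)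
qed

lemma run_chain:
  assumes "\<And>k. i \<le> k \<Longrightarrow> k < j \<Longrightarrow> run \<delta> (st k) (f k) (ms k) (st (Suc k))" "i \<le> j"
  shows "run \<delta> (st i) (concat (map f [i..<j])) (prod_list (map ms [i..<j])) (st j)"
  using assms
proof (induction j)
  case 0 then show ?case by (simp add: run.nil)
next
  case (Suc j)
  show ?case
  proof (cases "i = Suc j")
    case True then show ?thesis by (simp add: run.nil)
  next
    case False
    then have "i \<le> j" using Suc.prems by simp
    then have "run \<delta> (st i) (concat (map f [i..<j])) (prod_list (map ms [i..<j])) (st j)"
      using Suc by simp
    from run_append[OF this Suc.prems(1)[of j]] \<open>i \<le> j\<close> show ?thesis by simp
  qed
qed

lemma run_loops:
  "(\<And>j. j \<in> set js \<Longrightarrow> run \<delta> q (v j) (s j) q) \<Longrightarrow>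
   run \<delta> q (concat (map v js)) (prod_list (map s js)) q"
  by (induction js) (auto simp: run.nil dest: run_append)

lemma run_in_Q:
  "run \<delta> p w x p' \<Longrightarrow> \<forall>q c. fst ` \<delta> q c \<subseteq> Q \<Longrightarrow> p \<in> Q \<Longrightarrow> p' \<in> Q"
  by (induction rule: run.induct) force+



definition blk :: "nat \<Rightarrow> ab list" where "blk c = replicate c a @ replicate c b"
definition blocks :: "nat \<Rightarrow> nat \<Rightarrow> ab list" where "blocks c k = concat (replicate k (blk c))"
definition fw :: "nat \<Rightarrow> nat \<Rightarrow> nat \<Rightarrow> ab list" where
  "fw N c k = (if k = 0 then [a] else if k \<le> N then replicate (c-k) a @ replicate c b @ replicate (k+1) a
     else replicate (c-N-1) a @ replicate c b)"

lemma rep_cancel: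
  "replicate p x @ s = replicate n x @ t \<Longrightarrow> (s=[] \<or> hd s \<noteq> x) \<Longrightarrow> (t=[] \<or> hd t \<noteq> x) \<Longrightarrow> p=n \<and> s=t"
proof (induction p arbitrary: n)
  case 0 then show ?case by (cases n) auto
next
  case (Suc p) then show ?case by (cases n) auto
qed

lemma anbn_cons:
  assumes "replicate p a @ replicate q b @ y \<in> anbn_star" "p \<ge> 1" "q \<ge> 1" "y = [] \<or> hd y = a"
  shows "p = q \<and> y \<in> anbn_star"
proof -
  obtain ws where ws: "replicate p a @ replicate q b @ y = concat ws"
    and wsp: "\<forall>u \<in> set ws. \<exists>n\<ge>1. u = replicate n a @ replicate n b"
    using assms(1) by (auto simp: anbn_star_def)
  have "ws \<noteq> []" using ws assms(2) by auto
  then obtain u rest where wsc: "ws = u # rest" by (cases ws) auto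
  then obtain n where n: "n \<ge> 1" "u = replicate n a @ replicate n b" using wsp by auto
  have rest: "concat rest \<in> anbn_star" using wsp wsc by (auto simp: anbn_star_def)
  have hz: "concat rest = [] \<or> hd (concat rest) = a"
  proof (cases rest)
    case Nil then show ?thesis by simp
  next
    case (Cons u' rest')
    then obtain n' where "n' \<ge> 1" "u' = replicate n' a @ replicate n' b" using wsp wsc by auto
    then show ?thesis using Cons by (cases n') auto
  qed
  have eq: "replicate p a @ (replicate q b @ y) = replicate n a @ (replicate n b @ concat rest)"
    using ws wsc n by simp
  have 1: "p = n \<and> replicate q b @ y = replicate n b @ concat rest"
    apply (rule rep_cancel[OF eq])
    using assms(3) n(1) by (cases q; cases n; auto)+
  have 2: "q = n \<and> y = concat rest"
    apply (rule rep_cancel[where x=b]) using 1 apply simp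
    using assms(4) hz by auto
  show ?thesis using 1 2 rest by simp
qed

lemma blocks_strip:
  assumes "1 \<le> c" "blocks c k @ y \<in> anbn_star" "y = [] \<or> hd y = a"
  shows "y \<in> anbn_star"
  using assms(2)
proof (induction k)
  case 0 then show ?case by (simp add: blocks_def)
next
  case (Suc k)
  have "blocks c (Suc k) @ y = replicate c a @ replicate c b @ (blocks c k @ y)"
    by (simp add: blocks_def blk_def)
  moreover have "blocks c k @ y = [] \<or> hd (blocks c k @ y) = a"
    using assms(1,3) by (cases k; cases c) (auto simp: blocks_def blk_def)
  ultimately have "blocks c k @ y \<in> anbn_star" using anbn_cons[of c c "blocks c k @ y"] Suc.prems assms(1)
    by auto
  then show ?case using Suc.IH by simp
qed

lemma blocks_in: "1 \<le> c \<Longrightarrow> blocks c k \<in> anbn_star"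
  unfolding anbn_star_def blocks_def
  by (rule CollectI, rule exI[of _ "replicate k (blk c)"]) (auto simp: blk_def)

lemma blocks_Suc: "blocks c (Suc k) = blocks c k @ blk c"
  by (simp add: blocks_def replicate_append_same[symmetric])

lemma concat_fw:
  assumes "1 \<le> m" "m \<le> N + 1" "c = N + 2"
  shows "concat (map (fw N c) [0..<m]) = blocks c (m - 1) @ replicate m a"
  using assms
proof (induction m)
  case 0 then show ?case by simp
next
  case (Suc m)
  show ?case
  proof (cases m)
    case 0 then show ?thesis by (simp add: fw_def blocks_def)
  next
    case (Suc m0)
    have IH: "concat (map (fw N c) [0..<m]) = blocks c (m - 1) @ replicate m a"
      using Suc.IH Suc.prems Suc by simp
    have f: "fw N c m = replicate (c-m) a @ replicate c b @ replicate (m+1) a"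
      using Suc.prems Suc by (simp add: fw_def)
    have "replicate m a @ replicate (c-m) a = replicate c a"
      using Suc.prems by (simp add: replicate_add[symmetric])
    then have "concat (map (fw N c) [0..<Suc m]) = blocks c (m-1) @ blk c @ replicate (m+1) a"
      using IH f by (simp add: blk_def)
    then show ?thesis using blocks_Suc[of c "m-1"] Suc by simp
  qed
qed

lemma concat_fw_all:
  assumes "c = N + 2"
  shows "concat (map (fw N c) [0..<N+2]) = blocks c (N+1)"
proof -
  have "concat (map (fw N c) [0..<N+2]) = concat (map (fw N c) [0..<N+1]) @ fw N c (N+1)" by simp
  also have "\<dots> = blocks c N @ replicate (N+1) a @ replicate (c-N-1) a @ replicate c b"
    using concat_fw[of "N+1" N c] assms by (simp add: fw_def)
  finally have E: "concat (map (fw N c) [0..<N+2]) = blocks c N @ replicate (N+1) a @ replicate (c-N-1) a @ replicate c b" .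
  have "N+1 + (c-N-1) = c" using assms by simp
  then have R: "replicate (N+1) a @ replicate (c-N-1) a = replicate c a" by (metis replicate_add)
  show ?thesis using E R blocks_Suc[of c N] by (simp add: blk_def)
qed

lemma key_notin:
  assumes "1 \<le> m" "m < m'" "m' \<le> N" "c = N + 2"
  shows "blocks c (m-1) @ replicate m a @ fw N c m' @ r \<notin> anbn_star"
proof
  assume A: "blocks c (m-1) @ replicate m a @ fw N c m' @ r \<in> anbn_star"
  have f: "fw N c m' = replicate (c-m') a @ replicate c b @ replicate (m'+1) a"
    using assms by (simp add: fw_def)
  have "blocks c (m-1) @ replicate m a @ fw N c m' @ r = blocks c (m-1) @ (replicate (m + (c-m')) a @ replicate c b @ (a # replicate m' a @ r))"
    by (simp add: f replicate_add)
  then have "blocks c (m-1) @ (replicate (m + (c-m')) a @ replicate c b @ (a # replicate m' a @ r)) \<in> anbn_star"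
    using A by metis
  then have "replicate (m + (c-m')) a @ replicate c b @ (a # replicate m' a @ r) \<in> anbn_star"
    apply (rule blocks_strip[rotated]) using assms by (auto simp: hd_append hd_replicate)
  then have "m + (c-m') = c" using anbn_cons assms by fastforce
  then show False using assms by simp
qed



lemma upt_split3: "i \<le> j \<Longrightarrow> j \<le> k \<Longrightarrow> [i..<k] = [i..<j] @ [j..<k]"
  using upt_add_eq_append[of i j "k - j"] by simp

lemma tele_concat:
  assumes "mono (i::nat \<Rightarrow> nat)"
  shows "concat (map (\<lambda>j. concat (map f [i (j-1)..<i j])) [1..<n+1]) = concat (map f [i 0..<i n])"
proof (induction n)
  case 0 then show ?case by simp
next
  case (Suc n)
  have "[1..<Suc n + 1] = [1..<n+1] @ [n+1]" by simp
  moreover have "i 0 \<le> i n" "i n \<le> i (Suc n)" using monoD[OF assms, of 0 n] monoD[OF assms, of n "Suc n"] by auto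
  ultimately show ?case using Suc.IH upt_split3[of "i 0" "i n" "i (Suc n)"] by simp
qed

lemma tele_prod:
  assumes "mono (i::nat \<Rightarrow> nat)"
  shows "prod_list (map (\<lambda>j. prod_list (map (ms :: nat \<Rightarrow> 'm::monoid_mult) [i (j-1)..<i j])) [1..<n+1]) = prod_list (map ms [i 0..<i n])"
proof (induction n)
  case 0 then show ?case by simp
next
  case (Suc n)
  have "[1..<Suc n + 1] = [1..<n+1] @ [n+1]" by simp
  moreover have "i 0 \<le> i n" "i n \<le> i (Suc n)" using monoD[OF assms, of 0 n] monoD[OF assms, of n "Suc n"] by auto
  ultimately show ?case using Suc.IH upt_split3[of "i 0" "i n" "i (Suc n)"] by simp
qed

lemma pigeon:
  assumes "finite Q" "\<And>t. t \<in> T \<Longrightarrow> g t \<in> Q" "finite T" "card T > card Q * n"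
  shows "\<exists>q. card {t \<in> T. g t = q} \<ge> Suc n"
proof (rule ccontr)
  assume "\<not> ?thesis"
  then have le: "\<And>q. card {t \<in> T. g t = q} \<le> n" by (simp add: not_le less_Suc_eq_le)
  have TU: "T = (\<Union>q\<in>Q. {t \<in> T. g t = q})" using assms(2) by auto
  have "card (\<Union>q\<in>Q. {t \<in> T. g t = q}) \<le> (\<Sum>q\<in>Q. card {t \<in> T. g t = q})"
    by (rule card_UN_le[OF assms(1)])
  moreover have "card T = card (\<Union>q\<in>Q. {t \<in> T. g t = q})" using TU by (rule arg_cong[where f=card])
  ultimately have "card T \<le> (\<Sum>q\<in>Q. card {t \<in> T. g t = q})" by linarith
  also have "\<dots> \<le> (\<Sum>q\<in>Q. n)" by (rule sum_mono) (use le in auto)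
  finally show False using assms(4) by simp
qed

theorem corollary1:
  assumes "finitely_generated TYPE('m::monoid_mult)"
    and "permutable TYPE('m)"
  shows "anbn_star \<notin> L_Rat TYPE('m) {a, b}"
proof
  assume "anbn_star \<in> L_Rat TYPE('m) {a, b}"
  then obtain Q and \<delta> :: "nat \<Rightarrow> ab option \<Rightarrow> (nat \<times> 'm) set" and q0 Qa I0 I1 where
    aut: "is_M_automaton Q {a, b} \<delta> q0 Qa" and lang: "anbn_star = rat_accepted \<delta> q0 Qa I0 I1"
    unfolding L_Rat_def by blast
  have finQ: "finite Q" and q0Q: "q0 \<in> Q" and dQ: "\<And>q c. fst ` \<delta> q c \<subseteq> Q"
    using aut unfolding is_M_automaton_def by auto
  obtain n where n2: "n \<ge> 2" and perm: "\<And>s :: nat \<Rightarrow> 'm. \<exists>\<sigma>. \<sigma> permutes {1..n} \<and> \<sigma> \<noteq> id \<and>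
        prod_list (map s [1..<n+1]) = prod_list (map (\<lambda>i. s (\<sigma> i)) [1..<n+1])"
    using assms(2) unfolding permutable_def by blast
  define N where "N = card Q * n"
  define c where "c = N + 2"
  define f where "f = fw N c"
  define L where "L = N + 2"
  have W: "concat (map f [0..<L]) \<in> anbn_star"
    using concat_fw_all[of c N] blocks_in[of c "N+1"] by (simp add: f_def L_def c_def)
  then obtain qf x x0 where qf: "qf \<in> Qa" and rW: "run \<delta> q0 (concat (map f [0..<L])) x qf"
    and x0: "x0 \<in> I0" "x0 * x \<in> I1"
    using lang unfolding rat_accepted_def by blast
  obtain st ms e where st0: "st 0 = q0" and stk: "\<forall>k<L. run \<delta> (st k) (f k) (ms k) (st (Suc k))"
    and re: "run \<delta> (st L) [] e qf" and xe: "x = prod_list (map ms [0..<L]) * e"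
    using run_pieces[OF rW] by blast
  have chain: "run \<delta> (st i) (concat (map f [i..<j])) (prod_list (map ms [i..<j])) (st j)"
    if "i \<le> j" "j \<le> L" for i j
  proof (rule run_chain[OF _ that(1)])
    fix k assume "i \<le> k" "k < j"
    then have "k < L" using that(2) by simp
    then show "run \<delta> (st k) (f k) (ms k) (st (Suc k))" using stk by blast
  qed
  have stQ: "st k \<in> Q" if "k \<le> L" for k
  proof -
    have "run \<delta> (st 0) (concat (map f [0..<k])) (prod_list (map ms [0..<k])) (st k)"
      by (rule chain) (use that in auto)
    then have "run \<delta> q0 (concat (map f [0..<k])) (prod_list (map ms [0..<k])) (st k)"
      by (simp only: st0)
    have "\<forall>q c. fst ` \<delta> q c \<subseteq> Q" using dQ by blast
    from run_in_Q[OF \<open>run \<delta> q0 _ _ (st k)\<close> this q0Q] show ?thesis .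
  qed
  obtain q where cardS: "card {t \<in> {1..N+1}. st t = q} \<ge> Suc n"
  proof -
    have h1: "\<And>t. t \<in> {1..N+1} \<Longrightarrow> st t \<in> Q" using stQ by (simp add: L_def)
    have h2: "card {1..N+1} > card Q * n" by (simp add: N_def)
    have "\<exists>q. card {t \<in> {1..N+1}. st t = q} \<ge> Suc n"
      using pigeon[of Q "{1..N+1}" st n] finQ h1 h2 by simp
    then show ?thesis using that by blast
  qed
  define S where "S = {t \<in> {1..N+1}. st t = q}"
  define xs where "xs = sorted_list_of_set S"
  define i where "i j = xs ! (min j n)" for j
  have finS: "finite S" by (simp add: S_def)
  have cS: "card S \<ge> Suc n" using cardS unfolding S_def by assumption
  have lenxs: "length xs \<ge> Suc n" using cS unfolding xs_def length_sorted_list_of_set by assumption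
  have iS: "i j \<in> S" for j
  proof -
    have "min j n < length xs" using lenxs by simp
    then have "xs ! min j n \<in> set xs" by (rule nth_mem)
    moreover have "set xs = S" unfolding xs_def using finS by (rule set_sorted_list_of_set)
    ultimately have "xs ! min j n \<in> S" by simp
    then show ?thesis unfolding i_def .
  qed
  have i_range: "\<And>j. 1 \<le> i j \<and> i j \<le> N + 1" and i_st: "\<And>j. st (i j) = q"
    using iS by (auto simp: S_def)
  have i_strict: "i j < i j'" if "j < j'" "j' \<le> n" for j j'
  proof -
    have mj: "min j n = j" "min j' n = j'" using that by auto
    have "j' < length xs" using that lenxs by simp
    then have "xs ! j < xs ! j'"
      using sorted_wrt_nth_less[OF strict_sorted_list_of_set[of S], of j j'] that(1) unfolding xs_def by blast
    then show ?thesis unfolding i_def mj .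
  qed
  have i_mono: "mono i"
  proof (rule monoI)
    fix j j' :: nat assume jj: "j \<le> j'"
    have c1: "i j' = i (min j' n)" by (simp add: i_def)
    have c2: "i j = i (min j n)" by (simp add: i_def)
    have "min j n \<le> min j' n" using jj by simp
    then have "min j n < min j' n \<or> min j n = min j' n" by linarith
    moreover have "min j' n \<le> n" by simp
    ultimately have "i (min j n) \<le> i (min j' n)" using i_strict[of "min j n" "min j' n"] by fastforce
    then show "i j \<le> i j'" using c1 c2 by simp
  qed
  define v where "v j = concat (map f [i (j-1)..<i j])" for j
  define s where "s j = prod_list (map ms [i (j-1)..<i j])" for j
  have loops: "\<And>j. run \<delta> q (v j) (s j) q"
  proof -
    fix j
    have "i (j-1) \<le> i j" using monoD[OF i_mono, of "j-1" j] by simp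
    moreover have "i j \<le> L" using i_range[of j] by (simp add: L_def)
    ultimately have "run \<delta> (st (i (j-1))) (v j) (s j) (st (i j))"
      using chain[of "i (j-1)" "i j"] by (simp add: v_def s_def)
    then show "run \<delta> q (v j) (s j) q" using i_st by simp
  qed
  obtain \<sigma> where \<sigma>: "\<sigma> permutes {1..n}" "\<sigma> \<noteq> id"
    and \<sigma>eq: "prod_list (map s [1..<n+1]) = prod_list (map (\<lambda>i. s (\<sigma> i)) [1..<n+1])"
    using perm by blast
  define P where "P = concat (map f [0..<i 0])"
  define Z where "Z = concat (map f [i n..<L])"
  have rP: "run \<delta> q0 P (prod_list (map ms [0..<i 0])) q"
    using chain[of 0 "i 0"] i_range[of 0] i_st st0 by (simp add: P_def L_def)
  have rZ: "run \<delta> q (Z @ []) (prod_list (map ms [i n..<L]) * e) qf"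
    using run_append[OF chain[of "i n" L] re] i_range[of n] i_st by (simp add: Z_def L_def)
  have rL: "run \<delta> q (concat (map (\<lambda>j. v (\<sigma> j)) [1..<n+1])) (prod_list (map (\<lambda>j. s (\<sigma> j)) [1..<n+1])) q"
    using run_loops[of "[1..<n+1]" \<delta> q "\<lambda>j. v (\<sigma> j)" "\<lambda>j. s (\<sigma> j)"] loops by simp
  define W' where "W' = P @ concat (map (\<lambda>j. v (\<sigma> j)) [1..<n+1]) @ Z"
  have rW': "run \<delta> q0 W' (prod_list (map ms [0..<i 0]) * prod_list (map (\<lambda>j. s (\<sigma> j)) [1..<n+1]) * (prod_list (map ms [i n..<L]) * e)) qf"
    using run_append[OF run_append[OF rP rL] rZ] by (simp add: W'_def)
  have "prod_list (map ms [0..<i 0]) * prod_list (map (\<lambda>j. s (\<sigma> j)) [1..<n+1]) * (prod_list (map ms [i n..<L]) * e) = x"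
  proof -
    have "prod_list (map (\<lambda>j. s (\<sigma> j)) [1..<n+1]) = prod_list (map ms [i 0..<i n])"
    proof -
      have T: "prod_list (map s [1..<n+1]) = prod_list (map ms [i 0..<i n])"
        unfolding s_def by (rule tele_prod[OF i_mono])
      show ?thesis using trans[OF sym[OF \<sigma>eq] T] .
    qed
    moreover have "[0..<L] = [0..<i 0] @ [i 0..<i n] @ [i n..<L]"
      using upt_split3[of 0 "i 0" L] upt_split3[of "i 0" "i n" L] monoD[OF i_mono, of 0 n] i_range[of n]
      by (simp add: L_def)
    ultimately show ?thesis using xe by (simp add: mult.assoc)
  qed
  then have "W' \<in> anbn_star" using rW' qf x0 lang unfolding rat_accepted_def by blast
  have "\<exists>j. 1 \<le> j \<and> j \<le> n \<and> \<sigma> j \<noteq> j"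
  proof (rule ccontr)
    assume "\<not> ?thesis"
    then have "\<And>j. \<sigma> j = j" using permutes_not_in[OF \<sigma>(1)] by (metis atLeastAtMost_iff)
    then show False using \<sigma>(2) by auto
  qed
  define j0 where "j0 = (LEAST j. 1 \<le> j \<and> j \<le> n \<and> \<sigma> j \<noteq> j)"
  have j0: "1 \<le> j0" "j0 \<le> n" "\<sigma> j0 \<noteq> j0"
    using LeastI_ex[OF \<open>\<exists>j. 1 \<le> j \<and> j \<le> n \<and> \<sigma> j \<noteq> j\<close>] by (auto simp: j0_def)
  have fix_below: "\<And>j. 1 \<le> j \<Longrightarrow> j < j0 \<Longrightarrow> \<sigma> j = j"
    using not_less_Least j0(2) unfolding j0_def by fastforce
  have sj0: "1 \<le> \<sigma> j0" "\<sigma> j0 \<le> n" using permutes_in_image[OF \<sigma>(1)] j0 by auto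
  have gt: "\<sigma> j0 > j0"
  proof (rule ccontr)
    assume "\<not> ?thesis"
    then have "\<sigma> j0 < j0" using j0(3) by simp
    then have "\<sigma> (\<sigma> j0) = \<sigma> j0" using fix_below sj0 by simp
    then show False using permutes_inj[OF \<sigma>(1)] j0(3) by (metis injD)
  qed
  define m where "m = i (j0 - 1)"
  define m' where "m' = i (\<sigma> j0 - 1)"
  have mm': "m < m'" using i_strict[of "j0 - 1" "\<sigma> j0 - 1"] gt j0 sj0 by (simp add: m_def m'_def)
  have m'lt: "m' < i (\<sigma> j0)" using i_strict[of "\<sigma> j0 - 1" "\<sigma> j0"] sj0 by (simp add: m'_def)
  have m1: "1 \<le> m" "m \<le> N + 1" using i_range by (auto simp: m_def)
  have m'N: "m' \<le> N" using m'lt i_range[of "\<sigma> j0"] by simp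
  have split: "[1..<n+1] = [1..<j0] @ j0 # [Suc j0..<n+1]"
    using upt_split3[of 1 j0 "n+1"] upt_conv_Cons[of j0 "n+1"] j0 by simp
  have pre: "map (\<lambda>j. v (\<sigma> j)) [1..<j0] = map v [1..<j0]" using fix_below by simp
  have "concat (map v [1..<j0]) = concat (map f [i 0..<m])"
  proof -
    have vfun: "v = (\<lambda>j. concat (map f [i (j-1)..<i j]))" by (rule ext) (simp add: v_def)
    show ?thesis using tele_concat[OF i_mono, of f "j0 - 1"] j0 by (simp add: vfun m_def)
  qed
  then have Pm: "P @ concat (map v [1..<j0]) = concat (map f [0..<m])"
    using upt_split3[of 0 "i 0" m] monoD[OF i_mono, of 0 "j0 - 1"] by (simp add: P_def m_def)
  have vj0: "v (\<sigma> j0) = f m' @ concat (map f [Suc m'..<i (\<sigma> j0)])"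
    using m'lt upt_conv_Cons by (simp add: v_def m'_def)
  have "W' = concat (map f [0..<m]) @ f m' @ (concat (map f [Suc m'..<i (\<sigma> j0)]) @
      concat (map (\<lambda>j. v (\<sigma> j)) [Suc j0..<n+1]) @ Z)"
    unfolding W'_def split map_append concat_append pre list.map concat.simps vj0 Pm[symmetric] by simp
  also have "\<dots> = blocks c (m-1) @ replicate m a @ fw N c m' @ (concat (map f [Suc m'..<i (\<sigma> j0)]) @
      concat (map (\<lambda>j. v (\<sigma> j)) [Suc j0..<n+1]) @ Z)"
    using concat_fw[OF m1 c_def] by (simp add: f_def)
  finally have "W' \<notin> anbn_star" using key_notin[OF m1(1) mm' m'N c_def] by simp
  then show False using \<open>W' \<in> anbn_star\<close> by simp
qed

end
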